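(* Let $\phi:\mathbb{R}^n\to\mathbb{R}\cup\{+\infty\}$ be proper lsc convex, $(x^-,\chi,\varepsilon)\in\mathrm{dom}\,\phi\times[0,1)\times\mathbb{R}_{++}$, and let $(x,y,\Gamma,\lambda)$, with $x,y\in\mathrm{dom}\,\phi$, $\Gamma$ proper lsc convex, $\Gamma\le\phi$, $\lambda>0$, satisfy \[ \phi(y)+\frac{\chi}{2\lambda}\|y-x^-\|^2-\min_{u}\left\{\Gamma(u)+\frac1{2\lambda}\|u-x^-\|^2\right\}\le\varepsilon,\qquad x=\mathrm{argmin}_{u}\left\{\Gamma(u)+\frac1{2\lambda}\|u-x^-\|^2\right\}. \] Define $s:=(x^--x)/\lambda$ and $\eta:=\phi(y)-\Gamma(x)-\langle s,y-x\rangle$. Then: (a) $s\in\partial\Gamma(x)$, i.e. $\Gamma(u)\ge\Gamma(x)+\langle s,u-x\rangle$ for all $u\in\mathbb{R}^n$; (b) $s\in\partial_\eta\phi(y)$ and $0\le2\lambda\eta\le2\lambda\varepsilon-\|y-x\|^2+(1-\chi)\|y-x^-\|^2$.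
   Context: For $\eta\ge0$, $\partial_\eta\phi(y)=\{v:\phi(u)\ge\phi(y)+\langle v,u-y\rangle-\eta\ \forall u\in\mathbb{R}^n\}$. *)

theory Defs
  imports "HOL-Analysis.Analysis"
begin

definition edom :: "('a \<Rightarrow> ereal) \<Rightarrow> 'a set" where
  "edom f = {x. f x < \<infinity>}"

definition proper_fun :: "('a \<Rightarrow> ereal) \<Rightarrow> bool" where
  "proper_fun f \<longleftrightarrow> (\<forall>x. f x \<noteq> -\<infinity>) \<and> (\<exists>x. f x < \<infinity>)"

definition lsc_fun :: "('a::topological_space \<Rightarrow> ereal) \<Rightarrow> bool" where
  "lsc_fun f \<longleftrightarrow> (\<forall>x. f x \<le> Liminf (at x) f)"

definition convex_fun :: "('a::real_vector \<Rightarrow> ereal) \<Rightarrow> bool" where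
  "convex_fun f \<longleftrightarrow> (\<forall>x y t. 0 < t \<and> t < 1 \<longrightarrow>
      f ((1 - t) *\<^sub>R x + t *\<^sub>R y) \<le> ereal (1 - t) * f x + ereal t * f y)"

definition eps_subdiff :: "('a::real_inner \<Rightarrow> ereal) \<Rightarrow> real \<Rightarrow> 'a \<Rightarrow> 'a set" where
  "eps_subdiff f \<eta> y = {v. \<forall>u. f u \<ge> f y + ereal (inner v (u - y) - \<eta>)}"

end

theory Submission
  imports Defs
begin

lemma norm_add_sq: "(norm (a + t *\<^sub>R b))\<^sup>2 = (norm a)\<^sup>2 + 2 * t * inner a b + t\<^sup>2 * (norm b)\<^sup>2"
  for a b :: "'a::real_inner"
  unfolding power2_norm_eq_inner
  by (simp add: inner_add_left inner_add_right inner_commute power2_eq_square algebra_simps)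

lemma lim_arg:
  fixes D c :: real
  assumes c: "c \<ge> 0" and h: "\<And>t. 0 < t \<Longrightarrow> t < 1 \<Longrightarrow> D \<ge> - t * c"
  shows "D \<ge> 0"
proof (rule ccontr)
  assume "\<not> D \<ge> 0"
  hence D: "D < 0" by simp
  define t where "t = min (1/2) (- D / (c + 1))"
  have "0 < - D / (c + 1)" using D c by (intro divide_pos_pos) auto
  hence t0: "0 < t" by (simp add: t_def)
  have t1: "t < 1" by (simp add: t_def)
  have "t * c \<le> (- D / (c + 1)) * c" using c by (intro mult_right_mono) (auto simp: t_def)
  also have "\<dots> < - D"
  proof -
    have "(- D / (c + 1)) * c = -D * (c / (c+1))" by simp
    also have "\<dots> < -D * 1" using D c by (intro mult_strict_left_mono) auto
    finally show ?thesis by simp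
  qed
  finally show False using h[OF t0 t1] by simp
qed

theorem lemma3p3:
  fixes \<phi> \<Gamma> :: "'a::euclidean_space \<Rightarrow> ereal"
    and xm x y :: 'a and chi eps lam :: real
  assumes phi: "proper_fun \<phi>" "lsc_fun \<phi>" "convex_fun \<phi>"
    and xm: "xm \<in> edom \<phi>"
    and chi_rng: "0 \<le> chi" "chi < 1"
    and eps_pos: "0 < eps"
    and xy: "x \<in> edom \<phi>" "y \<in> edom \<phi>"
    and Gam: "proper_fun \<Gamma>" "lsc_fun \<Gamma>" "convex_fun \<Gamma>"
    and Gam_le: "\<And>u. \<Gamma> u \<le> \<phi> u"
    and lam_pos: "0 < lam"
    and xmin: "\<And>u. \<Gamma> x + ereal ((norm (x - xm))\<^sup>2 / (2 * lam))
                    \<le> \<Gamma> u + ereal ((norm (u - xm))\<^sup>2 / (2 * lam))"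
    and gap: "\<phi> y + ereal (chi / (2 * lam) * (norm (y - xm))\<^sup>2)
              - (\<Gamma> x + ereal ((norm (x - xm))\<^sup>2 / (2 * lam))) \<le> ereal eps"
  shows "let s = (1 / lam) *\<^sub>R (xm - x);
             \<eta> = real_of_ereal (\<phi> y) - real_of_ereal (\<Gamma> x) - inner s (y - x)
         in (\<forall>u. \<Gamma> u \<ge> \<Gamma> x + ereal (inner s (u - x)))
            \<and> s \<in> eps_subdiff \<phi> \<eta> y
            \<and> 0 \<le> 2 * lam * \<eta>
            \<and> 2 * lam * \<eta> \<le> 2 * lam * eps - (norm (y - x))\<^sup>2 + (1 - chi) * (norm (y - xm))\<^sup>2"
proof -
  define s where "s = (1 / lam) *\<^sub>R (xm - x)"
  define G where "G = real_of_ereal (\<Gamma> x)"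
  define P where "P = real_of_ereal (\<phi> y)"
  define \<eta> where "\<eta> = P - G - inner s (y - x)"
  have Gninf: "\<And>u. \<Gamma> u \<noteq> -\<infinity>" using Gam(1) by (simp add: proper_fun_def)
  have Pninf: "\<And>u. \<phi> u \<noteq> -\<infinity>" using phi(1) by (simp add: proper_fun_def)
  have "\<Gamma> x < \<infinity>" using Gam_le[of x] xy(1) unfolding edom_def by (metis mem_Collect_eq order_le_less_trans)
  hence Gx: "\<Gamma> x = ereal G" using Gninf[of x] unfolding G_def by (cases "\<Gamma> x") auto
  have Py: "\<phi> y = ereal P" using xy(2) Pninf[of y] unfolding P_def edom_def by (cases "\<phi> y") auto
  have A: "\<Gamma> u \<ge> \<Gamma> x + ereal (inner s (u - x))" for u
  proof (cases "\<Gamma> u = \<infinity>")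
    case True thus ?thesis by (simp add: Gx)
  next
    case False
    then obtain U where GU: "\<Gamma> u = ereal U" using Gninf[of u] by (cases "\<Gamma> u") auto
    define a where "a = x - xm"
    define b where "b = u - x"
    have key: "U - G - inner s b \<ge> - t * ((norm b)\<^sup>2 / (2 * lam))" if t: "0 < t" "t < 1" for t
    proof -
      define ut where "ut = (1 - t) *\<^sub>R x + t *\<^sub>R u"
      have c1: "\<Gamma> ut \<le> ereal ((1 - t) * G + t * U)"
      proof -
        have "\<Gamma> ut \<le> ereal (1 - t) * \<Gamma> x + ereal t * \<Gamma> u"
          using Gam(3) t unfolding convex_fun_def ut_def by blast
        thus ?thesis by (simp add: Gx GU)
      qed
      have "ereal (G + (norm a)\<^sup>2 / (2 * lam)) \<le> \<Gamma> ut + ereal ((norm (ut - xm))\<^sup>2 / (2 * lam))"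
        using xmin[of ut] by (simp add: Gx a_def)
      also have "\<dots> \<le> ereal ((1 - t) * G + t * U) + ereal ((norm (ut - xm))\<^sup>2 / (2 * lam))"
        using c1 by (rule add_right_mono)
      finally have r: "G + (norm a)\<^sup>2 / (2 * lam) \<le> (1 - t) * G + t * U + (norm (ut - xm))\<^sup>2 / (2 * lam)"
        by simp
      have "ut - xm = a + t *\<^sub>R b" by (simp add: ut_def a_def b_def algebra_simps)
      hence "(norm (ut - xm))\<^sup>2 = (norm a)\<^sup>2 + 2 * t * inner a b + t\<^sup>2 * (norm b)\<^sup>2"
        by (simp add: norm_add_sq)
      with r have r2: "0 \<le> t * (U - G) + (2 * t * inner a b + t\<^sup>2 * (norm b)\<^sup>2) / (2 * lam)"
        using lam_pos by (simp add: add_divide_distrib algebra_simps)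
      have sb: "inner s b = - inner a b / lam" by (simp add: s_def a_def inner_diff_left)
      have "0 \<le> t * ((U - G) + inner a b / lam + t * (norm b)\<^sup>2 / (2 * lam))"
        using r2 lam_pos by (simp add: field_simps power2_eq_square)
      hence "0 \<le> (U - G) + inner a b / lam + t * (norm b)\<^sup>2 / (2 * lam)"
        using t by (simp add: zero_le_mult_iff)
      thus ?thesis using sb by simp
    qed
    have "U - G - inner s b \<ge> 0"
      by (rule lim_arg[OF _ key]) (use lam_pos in auto)
    thus ?thesis by (simp add: GU Gx b_def)
  qed
  have B: "s \<in> eps_subdiff \<phi> \<eta> y"
    unfolding eps_subdiff_def
  proof (safe)
    fix u
    have "\<phi> y + ereal (inner s (u - y) - \<eta>) = ereal (G + inner s (u - x))"
      by (simp add: Py \<eta>_def inner_diff_right)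
    also have "\<dots> \<le> \<Gamma> u" using A[of u] by (simp add: Gx)
    also have "\<dots> \<le> \<phi> u" by (rule Gam_le)
    finally show "\<phi> y + ereal (inner s (u - y) - \<eta>) \<le> \<phi> u" .
  qed
  have "ereal G + ereal (inner s (y - x)) \<le> ereal P"
    using A[of y] Gam_le[of y] unfolding Gx Py by (rule order_trans)
  hence C: "0 \<le> \<eta>" by (simp add: \<eta>_def)
  have g: "P + chi / (2 * lam) * (norm (y - xm))\<^sup>2 - (G + (norm (x - xm))\<^sup>2 / (2 * lam)) \<le> eps"
    using gap by (simp add: Py Gx)
  have "y - xm = (x - xm) + 1 *\<^sub>R (y - x)" by simp
  hence nn: "(norm (y - xm))\<^sup>2 = (norm (x - xm))\<^sup>2 + 2 * inner (x - xm) (y - x) + (norm (y - x))\<^sup>2"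
    using norm_add_sq[of "x - xm" 1 "y - x"] by simp
  have si: "lam * inner s (y - x) = inner (xm - x) (y - x)" using lam_pos by (simp add: s_def)
  have "inner (xm - x) (y - x) = - inner (x - xm) (y - x)"
    by (simp add: inner_diff_left)
  have g2: "2 * lam * P + chi * (norm (y - xm))\<^sup>2 - 2 * lam * G - (norm (x - xm))\<^sup>2 \<le> 2 * lam * eps"
  proof -
    have "2 * lam * (P + chi / (2 * lam) * (norm (y - xm))\<^sup>2 - (G + (norm (x - xm))\<^sup>2 / (2 * lam))) \<le> 2 * lam * eps"
      using g lam_pos by (intro mult_left_mono) auto
    thus ?thesis using lam_pos by (simp add: right_diff_distrib distrib_left)
  qed
  have D: "2 * lam * \<eta> \<le> 2 * lam * eps - (norm (y - x))\<^sup>2 + (1 - chi) * (norm (y - xm))\<^sup>2"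
  proof -
    have e1: "2 * lam * \<eta> = 2 * lam * P - 2 * lam * G - 2 * (lam * inner s (y - x))"
      unfolding \<eta>_def by (simp only: right_diff_distrib mult.assoc)
    have e2: "(1 - chi) * (norm (y - xm))\<^sup>2 = (norm (y - xm))\<^sup>2 - chi * (norm (y - xm))\<^sup>2"
      by (simp only: left_diff_distrib mult_1)
    show ?thesis using e1 e2 si g2 nn \<open>inner (xm - x) (y - x) = - inner (x - xm) (y - x)\<close>
      by linarith
  qed
  have C2: "0 \<le> 2 * lam * \<eta>" using C lam_pos by simp
  have A2: "\<forall>u. \<Gamma> u \<ge> \<Gamma> x + ereal (inner s (u - x))" using A by blast
  show ?thesis
    unfolding Let_def s_def[symmetric] G_def[symmetric] P_def[symmetric] \<eta>_def[symmetric]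
    using A2 B C2 D by (intro conjI)
qed

end
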